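(* Let $-\infty<m\le M<\infty$, let $A$ be a non-empty closed subset of $[m,M]$, and let $\delta>0$. Then $$\lambda\big(A^\delta\cap[m,M]\big)\ge\big(\lambda(A)+\delta\big)\wedge(M-m).$$
   Context: $\lambda$ is Lebesgue measure. For non-empty $A\subseteq\mathbb R$ and $\delta>0$, the $\delta$-expansion is $A^\delta=\{x\in\mathbb R:\exists a\in A\text{ with }|x-a|\le\delta\}$. *)

theory Defs
  imports "HOL-Analysis.Analysis"
begin

definition expansion :: "real set \<Rightarrow> real \<Rightarrow> real set" where
  "expansion A \<delta> = {x. \<exists>a\<in>A. \<bar>x - a\<bar> \<le> \<delta>}"

end

theory Submission
  imports Defs
begin

lemma Icc_fmeas: "{m..M::real} \<in> fmeasurable lborel"
  proof (intro fmeasurableI)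
  show "emeasure lborel {m..M} < \<infinity>"
    by (cases "m \<le> M") (auto simp: emeasure_lborel_Icc)
qed auto

lemma sub_fmeas: "S \<in> sets lborel \<Longrightarrow> S \<subseteq> {m..M::real} \<Longrightarrow> S \<in> fmeasurable lborel"
  by (rule fmeasurableI2[OF Icc_fmeas])

lemma key:
  fixes A I E :: "real set"
  assumes "A \<in> sets lborel" "I \<in> sets lborel" "E \<in> sets lborel"
    "A \<subseteq> E" "I \<subseteq> E" "E \<subseteq> {m..M}" "A \<inter> I = {}"
  shows "measure lborel E \<ge> measure lborel A + measure lborel I"
proof -
  have fA: "A \<in> fmeasurable lborel" using assms by (intro sub_fmeas) auto
  have fI: "I \<in> fmeasurable lborel" using assms by (intro sub_fmeas) auto
  have fE: "E \<in> fmeasurable lborel" using assms by (intro sub_fmeas) auto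
  have "measure lborel (A \<union> I) = measure lborel A + measure lborel I"
    using fA fI assms by (intro measure_Union) (auto simp: fmeasurable_def)
  moreover have "measure lborel (A \<union> I) \<le> measure lborel E"
    using assms fE by (intro measure_mono_fmeasurable) auto
  ultimately show ?thesis by simp
qed

theorem mainTheorem18:
  fixes m M \<delta> :: real and A :: "real set"
  assumes "m \<le> M" and "A \<noteq> {}" and "closed A" and "A \<subseteq> {m..M}" and "\<delta> > 0"
  shows "measure lborel (expansion A \<delta> \<inter> {m..M}) \<ge> min (measure lborel A + \<delta>) (M - m)"
proof -
  let ?E = "expansion A \<delta> \<inter> {m..M}"
  have eq: "expansion A \<delta> = {x. infdist x A \<le> \<delta>}"
  proof (intro set_eqI iffI)
    fix x assume "x \<in> expansion A \<delta>"
    then obtain a where "a \<in> A" "\<bar>x - a\<bar> \<le> \<delta>" by (auto simp: expansion_def)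
    then show "x \<in> {x. infdist x A \<le> \<delta>}"
      using infdist_le[of a A x] by (auto simp: dist_real_def)
  next
    fix x assume "x \<in> {x. infdist x A \<le> \<delta>}"
    moreover obtain a where "a \<in> A" "infdist x A = dist x a"
      using infdist_attains_inf[OF assms(3,2)] by metis
    ultimately show "x \<in> expansion A \<delta>" by (auto simp: expansion_def dist_real_def)
  qed
  have "closed (expansion A \<delta>)" unfolding eq
    by (intro closed_Collect_le continuous_intros)
  then have Emeas: "?E \<in> sets lborel" using closed_Int[OF _ closed_atLeastAtMost, of _ m M] borel_closed by (metis sets_lborel)
  have Ameas: "A \<in> sets lborel" using assms(3) borel_closed by (metis sets_lborel)
  have AE: "A \<subseteq> ?E" using assms(4) assms(5) by (force simp: expansion_def)
  show ?thesis
  proof (cases "{m..M} \<subseteq> expansion A \<delta>")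
    case True
    then have "?E = {m..M}" by auto
    then show ?thesis using assms(1) by simp
  next
    case False
    then obtain x where x: "x \<in> {m..M}" "x \<notin> expansion A \<delta>" by blast
    then have far: "\<And>a. a \<in> A \<Longrightarrow> \<bar>x - a\<bar> > \<delta>" by (force simp: expansion_def)
    have "\<exists>I. I \<in> sets lborel \<and> I \<subseteq> ?E \<and> A \<inter> I = {} \<and> measure lborel I = \<delta>"
    proof (cases "A \<inter> {..x} = {}")
      case False
      define b where "b = Sup (A \<inter> {..x})"
      have bin: "b \<in> A \<inter> {..x}" unfolding b_def
        using False assms(3) by (intro closed_contains_Sup) (auto intro: closed_Int)
      have bx: "b + \<delta> < x" using far[of b] bin by auto
      have bmax: "\<And>y. y \<in> A \<Longrightarrow> y \<le> x \<Longrightarrow> y \<le> b" unfolding b_def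
        by (intro cSup_upper) auto
      have bm: "m \<le> b" using bin assms(4) by auto
      show ?thesis
      proof (intro exI[of _ "{b<..b+\<delta>}"] conjI)
        show "{b<..b+\<delta>} \<subseteq> ?E" using bin bx bm x(1)
          by (auto simp: expansion_def intro!: bexI[of _ b])
        show "A \<inter> {b<..b + \<delta>} = {}" using bmax bx by force
        show "measure lborel {b<..b + \<delta>} = \<delta>" using assms(5) by simp
      qed auto
    next
      case True
      then have above: "\<And>a. a \<in> A \<Longrightarrow> x < a" by force
      define c where "c = Inf A"
      have cin: "c \<in> A" unfolding c_def
        using assms(2,3,4) by (intro closed_contains_Inf bdd_belowI[of _ m]) auto
      have cx: "x < c - \<delta>" using far[of c] cin above[of c] by auto
      have cmin: "\<And>y. y \<in> A \<Longrightarrow> c \<le> y" unfolding c_def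
        using assms(4) by (intro cInf_lower bdd_belowI[of _ m]) auto
      have cM: "c \<le> M" using cin assms(4) by auto
      show ?thesis
      proof (intro exI[of _ "{c-\<delta>..<c}"] conjI)
        show "{c-\<delta>..<c} \<subseteq> ?E" using cin cx cM x(1)
          by (auto simp: expansion_def intro!: bexI[of _ c])
        show "A \<inter> {c-\<delta>..<c} = {}" using cmin by force
        show "measure lborel {c-\<delta>..<c} = \<delta>" using assms(5) by simp
      qed auto
    qed
    then obtain I where I: "I \<in> sets lborel" "I \<subseteq> ?E" "A \<inter> I = {}" "measure lborel I = \<delta>"
      by blast
    have "measure lborel ?E \<ge> measure lborel A + measure lborel I"
      using key[OF Ameas I(1) Emeas AE I(2) _ I(3), of m M] by auto
    then show ?thesis using I(4) by linarith
  qed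
qed

end
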